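(* Let an FCA with state set $S$, neighborhood $m=l+1+r$, local rule $f$ and boundary type $b\in\{\text{null},\text{periodic}\}$ be given, and let $G$ be its reversibility graph. Let $N$ be a negative vertex of $G$ with value $k\ge 1$, and let $C_1,\dots,C_i$ be circuits of $G$ passing through $N$, of lengths $r_1,\dots,r_i$. Then for all integers $x_1,\dots,x_i\ge 0$ the FCA is not $(k+x_1r_1+\dots+x_ir_i)$-cell-reversible.
   Context: A one-dimensional finite cellular automaton (FCA) is given by a state set $S=\{0,1,\dots,s-1\}$, integers $l,r\ge 0$ with neighborhood size $m=l+1+r\ge 2$, a local rule $f:S^m\to S$, and a boundary type $b\in\{\text{null},\text{periodic}\}$. For $n\ge 1$ the global map $\tau_n:S^n\to S^n$ sends $(x_0,\dots,x_{n-1})$ to $(y_0,\dots,y_{n-1})$ with $y_i=f(x_{i-l},\dots,x_{i+r})$, where for the null boundary $x_j=0$ whenever $j<0$ or $j>n-1$, and for the periodic boundary indices are taken modulo $n$. The FCA is $n$-cell-reversible if $\tau_n$ is a bijection (equivalently, since $S^n$ is finite, surjective). Reversibility graph (RG). Null boundary: vertices are subsets of $S^{m-1}$; the root is $N_0=\{(a_1,\dots,a_{m-1})\in S^{m-1}: a_1=\dots=a_l=0\}$; the acceptance set is $R=\{(a_1,\dots,a_{m-1})\in S^{m-1}: a_{m-r}=\dots=a_{m-1}=0\}$ (so $R=S^{m-1}$ if $r=0$); for a subset $N$ and $c\in S$, $\delta(N,c)=\{(a_1,\dots,a_{m-1})\in S^{m-1}:\exists a_0\in S,\ (a_0,\dots,a_{m-2})\in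 N,\ f(a_0,a_1,\dots,a_{m-1})=c\}$. Periodic boundary: vertices are subsets of $S^{m-1}\times S^{m-1}$; the root and the acceptance set are $N_0=R=\{(a,a):a\in S^{m-1}\}$; $\delta(N,c)=\{((a_1,\dots,a_{m-1}),(b_1,\dots,b_{m-1})):\exists b_0\in S,\ ((a_1,\dots,a_{m-1}),(b_0,\dots,b_{m-2}))\in N,\ f(b_0,\dots,b_{m-1})=c\}$. In both cases the RG is the directed graph whose vertex set consists of all subsets obtainable from $N_0$ by repeatedly applying $\delta$ (including $N_0$; equal subsets are the same vertex; the empty set may occur), with, for each vertex $N$ and each $c\in S$, an edge labelled $c$ from $N$ to $\delta(N,c)$. The value of a vertex $N$ is the length of a shortest directed path from $N_0$ to $N$. A vertex $N$ is negative if $N\cap R=\emptyset$. A circuit is an elementary directed cycle of the RG (a closed directed path with no repeated vertex other than its start = end; a loop is a circuit of length $1$); its length is its number of edges, and it passes through $N$ if $N$ is one of its vertices. *)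

theory Defs
  imports Main
begin

text \<open>States are S = {0..<s}; a local rule is f :: nat list => nat applied to
  lists of length m = l+1+r. Configurations of n cells are lists of length n over S.\<close>

definition tuples :: "nat \<Rightarrow> nat \<Rightarrow> nat list set" where
  "tuples s k = {a. length a = k \<and> set a \<subseteq> {0..<s}}"

definition configs :: "nat \<Rightarrow> nat \<Rightarrow> nat list set" where
  "configs s n = tuples s n"

datatype boundary = Null | Periodic

definition cell_val :: "boundary \<Rightarrow> nat list \<Rightarrow> int \<Rightarrow> nat" where
  "cell_val b xs j = (case b of
      Null \<Rightarrow> (if 0 \<le> j \<and> j < int (length xs) then xs ! nat j else 0)
    | Periodic \<Rightarrow> xs ! nat (j mod int (length xs)))"

definition global_map :: "nat \<Rightarrow> nat \<Rightarrow> (nat list \<Rightarrow> nat) \<Rightarrow> boundary \<Rightarrow> nat list \<Rightarrow> nat list" where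
  "global_map l r f b xs =
     map (\<lambda>i. f (map (cell_val b xs) [int i - int l .. int i + int r])) [0..<length xs]"

definition n_cell_reversible :: "nat \<Rightarrow> nat \<Rightarrow> nat \<Rightarrow> (nat list \<Rightarrow> nat) \<Rightarrow> boundary \<Rightarrow> nat \<Rightarrow> bool" where
  "n_cell_reversible s l r f b n = bij_betw (global_map l r f b) (configs s n) (configs s n)"

definition rg_vertices :: "'v set \<Rightarrow> ('v set \<Rightarrow> nat \<Rightarrow> 'v set) \<Rightarrow> nat set \<Rightarrow> 'v set set" where
  "rg_vertices root delta S = {N. \<exists>w. set w \<subseteq> S \<and> foldl delta root w = N}"

definition rg_value :: "'v set \<Rightarrow> ('v set \<Rightarrow> nat \<Rightarrow> 'v set) \<Rightarrow> nat set \<Rightarrow> 'v set \<Rightarrow> nat" where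
  "rg_value root delta S N = (LEAST k. \<exists>w. length w = k \<and> set w \<subseteq> S \<and> foldl delta root w = N)"

definition rg_circuit :: "'v set \<Rightarrow> ('v set \<Rightarrow> nat \<Rightarrow> 'v set) \<Rightarrow> nat set \<Rightarrow> 'v set list \<Rightarrow> bool" where
  "rg_circuit root delta S vs \<longleftrightarrow> vs \<noteq> [] \<and> distinct vs \<and> set vs \<subseteq> rg_vertices root delta S \<and>
     (\<forall>j < length vs. \<exists>c\<in>S. delta (vs ! j) c = vs ! ((j + 1) mod length vs))"

definition null_root :: "nat \<Rightarrow> nat \<Rightarrow> nat \<Rightarrow> nat list set" where
  "null_root s l r = {a \<in> tuples s (l + r). \<forall>j<l. a ! j = 0}"

definition null_accept :: "nat \<Rightarrow> nat \<Rightarrow> nat \<Rightarrow> nat list set" where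
  "null_accept s l r = {a \<in> tuples s (l + r). \<forall>j. l \<le> j \<and> j < l + r \<longrightarrow> a ! j = 0}"

definition null_delta :: "nat \<Rightarrow> nat \<Rightarrow> nat \<Rightarrow> (nat list \<Rightarrow> nat) \<Rightarrow> nat list set \<Rightarrow> nat \<Rightarrow> nat list set" where
  "null_delta s l r f N c = {a \<in> tuples s (l + r).
      \<exists>a0<s. (a0 # butlast a) \<in> N \<and> f (a0 # a) = c}"

definition per_root :: "nat \<Rightarrow> nat \<Rightarrow> nat \<Rightarrow> (nat list \<times> nat list) set" where
  "per_root s l r = {(a, a) | a. a \<in> tuples s (l + r)}"

definition per_delta :: "nat \<Rightarrow> nat \<Rightarrow> nat \<Rightarrow> (nat list \<Rightarrow> nat) \<Rightarrow>
    (nat list \<times> nat list) set \<Rightarrow> nat \<Rightarrow> (nat list \<times> nat list) set" where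
  "per_delta s l r f N c = {(a, bb). a \<in> tuples s (l + r) \<and> bb \<in> tuples s (l + r) \<and>
      (\<exists>b0<s. (a, b0 # butlast bb) \<in> N \<and> f (b0 # bb) = c)}"

end

theory Submission
  imports Defs
begin

lemma circuit_word:
  assumes "rg_circuit root delta S C" "N \<in> set C"
  shows "\<exists>u. length u = length C \<and> set u \<subseteq> S \<and> foldl delta N u = N"
proof -
  define L where "L = length C"
  have L0: "L > 0" using assms(1) unfolding rg_circuit_def L_def by auto
  obtain p where p: "p < L" "C ! p = N" using assms(2) unfolding L_def by (metis in_set_conv_nth)
  have step: "\<forall>j<L. \<exists>c\<in>S. delta (C ! j) c = C ! ((j + 1) mod L)"
    using assms(1) unfolding rg_circuit_def L_def by auto
  define c where "c t = (SOME c. c \<in> S \<and> delta (C ! ((p + t) mod L)) c = C ! (((p + t) mod L + 1) mod L))" for t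
  have c: "c t \<in> S \<and> delta (C ! ((p + t) mod L)) (c t) = C ! (((p + t) mod L + 1) mod L)" for t
  proof -
    have "(p + t) mod L < L" using L0 by simp
    then obtain d where "d \<in> S" "delta (C ! ((p + t) mod L)) d = C ! (((p + t) mod L + 1) mod L)"
      using step by blast
    then show ?thesis unfolding c_def by (rule someI[where x=d, OF conjI])
  qed
  have fold: "foldl delta N (map c [0..<t]) = C ! ((p + t) mod L)" for t
  proof (induction t)
    case 0
    then show ?case using p by simp
  next
    case (Suc t)
    have "foldl delta N (map c [0..<Suc t]) = delta (C ! ((p + t) mod L)) (c t)"
      using Suc by simp
    also have "\<dots> = C ! (((p + t) mod L + 1) mod L)" using c by blast
    also have "((p + t) mod L + 1) mod L = (p + Suc t) mod L" by (simp add: mod_Suc_eq)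
    finally show ?case .
  qed
  show ?thesis
    apply (rule exI[of _ "map c [0..<L]"])
    using fold[of L] c p L_def by auto
qed

lemma loops_word:
  fixes i :: nat and len x :: "nat \<Rightarrow> nat"
  assumes "\<forall>j<i. \<exists>u. length u = len j \<and> set u \<subseteq> S \<and> foldl delta N u = N"
  shows "\<exists>v. length v = (\<Sum>j<i. x j * len j) \<and> set v \<subseteq> S \<and> foldl delta N v = N"
  using assms
proof (induction i)
  case 0
  then show ?case by (rule_tac x="[]" in exI) simp
next
  case (Suc i)
  then obtain v where v: "length v = (\<Sum>j<i. x j * len j)" "set v \<subseteq> S" "foldl delta N v = N" by auto
  obtain u where u: "length u = len i" "set u \<subseteq> S" "foldl delta N u = N" using Suc.prems by blast
  have rep: "foldl delta N (concat (replicate n u)) = N" for n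
    by (induction n) (auto simp: u)
  have lrep: "length (concat (replicate n u)) = n * len i" for n
    by (induction n) (auto simp: u)
  show ?case
    apply (rule exI[of _ "v @ concat (replicate (x i) u)"])
    using v u rep lrep by auto
qed

lemma gen_word:
  fixes i :: nat and len x :: "nat \<Rightarrow> nat"
  assumes "N \<in> rg_vertices root delta S" "rg_value root delta S N = k"
    "\<forall>j<i. \<exists>C. rg_circuit root delta S C \<and> N \<in> set C \<and> length C = len j"
  shows "\<exists>y. length y = k + (\<Sum>j<i. x j * len j) \<and> set y \<subseteq> S \<and> foldl delta root y = N"
proof -
  have ex: "\<exists>k w. length w = k \<and> set w \<subseteq> S \<and> foldl delta root w = N"
    using assms(1) unfolding rg_vertices_def by auto
  obtain w where w: "length w = k" "set w \<subseteq> S" "foldl delta root w = N"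
    using LeastI_ex[OF ex] assms(2) unfolding rg_value_def by auto
  have "\<forall>j<i. \<exists>u. length u = len j \<and> set u \<subseteq> S \<and> foldl delta N u = N"
    using assms(3) circuit_word by metis
  from loops_word[OF this, of x] obtain v where
    "length v = (\<Sum>j<i. x j * len j)" "set v \<subseteq> S" "foldl delta N v = N" by blast
  then show ?thesis using w by (rule_tac x="w @ v" in exI) auto
qed

definition win :: "boundary \<Rightarrow> nat list \<Rightarrow> nat \<Rightarrow> nat \<Rightarrow> nat \<Rightarrow> nat list" where
  "win b x l r t = map (cell_val b x) [int t - int l .. int t + int r - 1]"

lemma win_len[simp]: "length (win b x l r t) = l + r"
  unfolding win_def by simp

lemma win_nth: "k < l + r \<Longrightarrow> win b x l r t ! k = cell_val b x (int t - int l + int k)"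
  unfolding win_def by simp

lemma cell_val_lt:
  assumes "x \<in> configs s n" "s \<ge> 1" "b = Periodic \<Longrightarrow> n > 0"
  shows "cell_val b x j < s"
proof (cases b)
  case Null
  then show ?thesis using assms unfolding cell_val_def configs_def tuples_def
    by (auto simp: subset_iff)
next
  case Periodic
  then have n: "n > 0" using assms by simp
  have len: "length x = n" using assms(1) unfolding configs_def tuples_def by auto
  have "nat (j mod int n) < n" using n by (simp add: nat_less_iff)
  then show ?thesis using assms(1) Periodic len unfolding cell_val_def configs_def tuples_def
    by (auto simp: subset_iff)
qed

lemma win_tuples:
  assumes "x \<in> configs s n" "s \<ge> 1" "b = Periodic \<Longrightarrow> n > 0"
  shows "win b x l r t \<in> tuples s (l + r)"
  unfolding tuples_def win_def using cell_val_lt[OF assms] by auto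

lemma gm_nth:
  assumes "t < length x"
  shows "global_map l r f b x ! t = f (map (cell_val b x) [int t - int l .. int t + int r])"
  unfolding global_map_def using assms by simp

lemma win_step1:
  assumes "l + r \<ge> 1"
  shows "cell_val b x (int t - int l) # butlast (win b x l r (Suc t)) = win b x l r t"
proof (rule nth_equalityI)
  show "length (cell_val b x (int t - int l) # butlast (win b x l r (Suc t))) = length (win b x l r t)"
    using assms by simp
next
  fix k assume "k < length (cell_val b x (int t - int l) # butlast (win b x l r (Suc t)))"
  then have k: "k < l + r" using assms by simp
  show "(cell_val b x (int t - int l) # butlast (win b x l r (Suc t))) ! k = win b x l r t ! k"
  proof (cases k)
    case 0
    then show ?thesis using k by (simp add: win_nth)
  next
    case (Suc k')
    then show ?thesis using k by (simp add: win_nth nth_butlast algebra_simps)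
  qed
qed

lemma win_step2:
  shows "cell_val b x (int t - int l) # win b x l r (Suc t) = map (cell_val b x) [int t - int l .. int t + int r]"
proof (rule nth_equalityI)
  show "length (cell_val b x (int t - int l) # win b x l r (Suc t)) = length (map (cell_val b x) [int t - int l .. int t + int r])"
    by simp
next
  fix k assume "k < length (cell_val b x (int t - int l) # win b x l r (Suc t))"
  then have k: "k < l + r + 1" by simp
  show "(cell_val b x (int t - int l) # win b x l r (Suc t)) ! k = map (cell_val b x) [int t - int l .. int t + int r] ! k"
  proof (cases k)
    case 0
    then show ?thesis using k by (simp add: win_nth)
  next
    case (Suc k')
    then show ?thesis using k by (simp add: win_nth algebra_simps)
  qed
qed

lemma reach_null:
  assumes "x \<in> configs s n" "s \<ge> 1" "l + r \<ge> 1" "t \<le> n"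
  shows "win Null x l r t \<in> foldl (null_delta s l r f) (null_root s l r) (take t (global_map l r f Null x))"
  using assms(4)
proof (induction t)
  case 0
  have "win Null x l r 0 ! j = 0" if "j < l" for j
    using that by (simp add: win_nth cell_val_def)
  moreover have "win Null x l r 0 \<in> tuples s (l+r)" by (rule win_tuples[OF assms(1,2)]) simp
  ultimately show ?case by (simp add: null_root_def)
next
  case (Suc t)
  have len: "length x = n" using assms(1) unfolding configs_def tuples_def by auto
  have lg: "length (global_map l r f Null x) = n" unfolding global_map_def len[symmetric] by simp
  have tk: "take (Suc t) (global_map l r f Null x) = take t (global_map l r f Null x) @ [global_map l r f Null x ! t]"
    using Suc.prems lg by (simp add: take_Suc_conv_app_nth)
  have IH: "win Null x l r t \<in> foldl (null_delta s l r f) (null_root s l r) (take t (global_map l r f Null x))"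
    using Suc by simp
  define A where "A = foldl (null_delta s l r f) (null_root s l r) (take t (global_map l r f Null x))"
  have wt: "win Null x l r (Suc t) \<in> tuples s (l+r)" "win Null x l r 0 \<in> tuples s (l+r)"
    by (rule win_tuples[OF assms(1,2)]; use assms in simp)+
  have "win Null x l r (Suc t) \<in> null_delta s l r f A (global_map l r f Null x ! t)"
    unfolding null_delta_def
    using IH[folded A_def] wt win_step1[OF assms(3)] win_step2 gm_nth[of t x] Suc.prems len
      cell_val_lt[OF assms(1,2), of Null "int t - int l"]
    by (auto intro!: exI[of _ "cell_val Null x (int t - int l)"])
  then show ?case unfolding tk foldl_append foldl.simps A_def .
qed

lemma reach_per:
  assumes "x \<in> configs s n" "s \<ge> 1" "l + r \<ge> 1" "t \<le> n" "n > 0"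
  shows "(win Periodic x l r 0, win Periodic x l r t) \<in> foldl (per_delta s l r f) (per_root s l r) (take t (global_map l r f Periodic x))"
  using assms(4)
proof (induction t)
  case 0
  then show ?case using win_tuples[OF assms(1,2)] assms(5) by (simp add: per_root_def)
next
  case (Suc t)
  have len: "length x = n" using assms(1) unfolding configs_def tuples_def by auto
  have lg: "length (global_map l r f Periodic x) = n" unfolding global_map_def len[symmetric] by simp
  have tk: "take (Suc t) (global_map l r f Periodic x) = take t (global_map l r f Periodic x) @ [global_map l r f Periodic x ! t]"
    using Suc.prems lg by (simp add: take_Suc_conv_app_nth)
  have IH: "(win Periodic x l r 0, win Periodic x l r t) \<in> foldl (per_delta s l r f) (per_root s l r) (take t (global_map l r f Periodic x))"
    using Suc by simp
  define A where "A = foldl (per_delta s l r f) (per_root s l r) (take t (global_map l r f Periodic x))"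
  have wt: "win Periodic x l r (Suc t) \<in> tuples s (l+r)" "win Periodic x l r 0 \<in> tuples s (l+r)"
    by (rule win_tuples[OF assms(1,2)]; use assms in simp)+
  have "(win Periodic x l r 0, win Periodic x l r (Suc t)) \<in> per_delta s l r f A (global_map l r f Periodic x ! t)"
    unfolding per_delta_def
    using IH[folded A_def] wt win_step1[OF assms(3)] win_step2 gm_nth[of t x] Suc.prems len
      cell_val_lt[OF assms(1,2), of Periodic "int t - int l"] assms(5)
    by (auto intro!: exI[of _ "cell_val Periodic x (int t - int l)"])
  then show ?case unfolding tk foldl_append foldl.simps A_def .
qed

lemma null_final:
  assumes "length x = n"
  shows "win Null x l r n \<in> null_accept s l r \<or> \<not> win Null x l r n \<in> tuples s (l+r)"
  unfolding null_accept_def using assms by (auto simp: win_nth cell_val_def)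

lemma per_final:
  assumes "length x = n" "n > 0"
  shows "win Periodic x l r n = win Periodic x l r 0"
proof (rule nth_equalityI)
  fix k assume "k < length (win Periodic x l r n)"
  then have "k < l + r" by simp
  moreover have "(int n - int l + int k) mod int n = (int 0 - int l + int k) mod int n"
    by (metis add.commute add.left_neutral diff_add_eq mod_add_self2 of_nat_0)
  ultimately show "win Periodic x l r n ! k = win Periodic x l r 0 ! k"
    by (simp add: win_nth cell_val_def assms(1) del: of_nat_0)
qed simp


theorem theorem3:
  fixes s l r :: nat and f :: "nat list \<Rightarrow> nat"
  assumes "s \<ge> 1"
    and "l + 1 + r \<ge> 2"
    and "\<forall>xs \<in> tuples s (l + 1 + r). f xs < s"
  shows "(\<forall>(N :: nat list set) k (i :: nat) (len :: nat \<Rightarrow> nat) (x :: nat \<Rightarrow> nat).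
           N \<in> rg_vertices (null_root s l r) (null_delta s l r f) {0..<s}
         \<and> N \<inter> null_accept s l r = {}
         \<and> rg_value (null_root s l r) (null_delta s l r f) {0..<s} N = k \<and> k \<ge> 1
         \<and> (\<forall>j<i. \<exists>C. rg_circuit (null_root s l r) (null_delta s l r f) {0..<s} C
                       \<and> N \<in> set C \<and> length C = len j)
         \<longrightarrow> \<not> n_cell_reversible s l r f Null (k + (\<Sum>j<i. x j * len j)))
       \<and> (\<forall>(N :: (nat list \<times> nat list) set) k (i :: nat) (len :: nat \<Rightarrow> nat) (x :: nat \<Rightarrow> nat).
           N \<in> rg_vertices (per_root s l r) (per_delta s l r f) {0..<s}
         \<and> N \<inter> per_root s l r = {}
         \<and> rg_value (per_root s l r) (per_delta s l r f) {0..<s} N = k \<and> k \<ge> 1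
         \<and> (\<forall>j<i. \<exists>C. rg_circuit (per_root s l r) (per_delta s l r f) {0..<s} C
                       \<and> N \<in> set C \<and> length C = len j)
         \<longrightarrow> \<not> n_cell_reversible s l r f Periodic (k + (\<Sum>j<i. x j * len j)))"
proof (intro conjI allI impI)
  have lr: "l + r \<ge> 1" using assms(2) by simp
  fix N :: "nat list set" and k i and len x :: "nat \<Rightarrow> nat"
  assume H: "N \<in> rg_vertices (null_root s l r) (null_delta s l r f) {0..<s}
         \<and> N \<inter> null_accept s l r = {}
         \<and> rg_value (null_root s l r) (null_delta s l r f) {0..<s} N = k \<and> k \<ge> 1
         \<and> (\<forall>j<i. \<exists>C. rg_circuit (null_root s l r) (null_delta s l r f) {0..<s} C
                       \<and> N \<in> set C \<and> length C = len j)"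
  define n where "n = k + (\<Sum>j<i. x j * len j)"
  obtain y where y: "length y = n" "set y \<subseteq> {0..<s}" "foldl (null_delta s l r f) (null_root s l r) y = N"
    using gen_word[of N _ _ _ k i len x] H unfolding n_def by blast
  show "\<not> n_cell_reversible s l r f Null n"
  proof
    assume "n_cell_reversible s l r f Null n"
    then have "global_map l r f Null ` configs s n = configs s n"
      unfolding n_cell_reversible_def bij_betw_def by blast
    moreover have "y \<in> configs s n" using y unfolding configs_def tuples_def by auto
    ultimately obtain z where z: "z \<in> configs s n" "global_map l r f Null z = y" by force
    have lz: "length z = n" using z unfolding configs_def tuples_def by auto
    have "win Null z l r n \<in> N"
      using reach_null[OF z(1) assms(1) lr, of n f] y z lz by simp
    moreover have "win Null z l r n \<in> tuples s (l+r)" by (rule win_tuples[OF z(1) assms(1)]) simp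
    ultimately show False using null_final[OF lz, of l r s] H by blast
  qed
next
  have lr: "l + r \<ge> 1" using assms(2) by simp
  fix N :: "(nat list \<times> nat list) set" and k i and len x :: "nat \<Rightarrow> nat"
  assume H: "N \<in> rg_vertices (per_root s l r) (per_delta s l r f) {0..<s}
         \<and> N \<inter> per_root s l r = {}
         \<and> rg_value (per_root s l r) (per_delta s l r f) {0..<s} N = k \<and> k \<ge> 1
         \<and> (\<forall>j<i. \<exists>C. rg_circuit (per_root s l r) (per_delta s l r f) {0..<s} C
                       \<and> N \<in> set C \<and> length C = len j)"
  define n where "n = k + (\<Sum>j<i. x j * len j)"
  have n0: "n > 0" using H unfolding n_def by simp
  obtain y where y: "length y = n" "set y \<subseteq> {0..<s}" "foldl (per_delta s l r f) (per_root s l r) y = N"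
    using gen_word[of N _ _ _ k i len x] H unfolding n_def by blast
  show "\<not> n_cell_reversible s l r f Periodic n"
  proof
    assume "n_cell_reversible s l r f Periodic n"
    then have "global_map l r f Periodic ` configs s n = configs s n"
      unfolding n_cell_reversible_def bij_betw_def by blast
    moreover have "y \<in> configs s n" using y unfolding configs_def tuples_def by auto
    ultimately obtain z where z: "z \<in> configs s n" "global_map l r f Periodic z = y" by force
    have lz: "length z = n" using z unfolding configs_def tuples_def by auto
    have "(win Periodic z l r 0, win Periodic z l r n) \<in> N"
      using reach_per[OF z(1) assms(1) lr _ n0, of n f] y z lz by simp
    moreover have "win Periodic z l r 0 \<in> tuples s (l+r)" by (rule win_tuples[OF z(1) assms(1)]) (use n0 in simp)
    ultimately show False using per_final[OF lz n0, of l r] H unfolding per_root_def by blast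
  qed
qed

end
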